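(* In the setting of the context, for every iteration $n$ (with $R_n\neq0$): (a) $M\subset H_n:=\bigcap_{k=1}^{N_n}H(v_{n,k},\beta_{n,k})$, where $H(v,\beta)=\{x\in X:\langle v,x\rangle=\beta\}$. (b) $J_p(x_n)-J_p(x_0)$ lies in the linear span of the search directions of all previous iterations, $\mathrm{span}\bigcup_{m<n}V_m$, and hence in $\overline{\mathcal{R}(A^* )}$. (c) $x_{n+1}=\Pi^{X}_{H_n}(x_n)$, the Bregman projection of $x_n$ onto $H_n$ in $X$, and $J_p(x_{n+1})=\Pi^{X^*}_{J_p(x_n)+V_n}(J_p(z))$ for every $z\in M$, where $\Pi^{X^*}$ is the Bregman projection in $X^*$. (d) $J_{p^*}(v_{n,N_n})=\Pi^{X}_{V_{n-1}^{\perp}}(J_{p^*}(u_n))$, where $V_{n-1}^\perp=\{x\in X:\langle v,x\rangle=0\ \forall v\in V_{n-1}\}$.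
   Context: $X$ is a real smooth, uniformly convex Banach space, $Y$ a real Banach space, $A:X\to Y$ bounded linear with adjoint $A^*$, $y\in\mathcal{R}(A)$, $M=\{x:Ax=y\}$. Fix $p,r\in(1,\infty)$, $p^*=p/(p-1)$. $J_p:X\to X^*$ is the duality mapping with gauge $t^{p-1}$, $J_{p^*}:X^*\to X$ that of $X^*$ with gauge $t^{p^*-1}$ (inverse of $J_p$), $J_r^Y$ a single-valued selection of the duality mapping of $Y$ with gauge $t^{r-1}$. Bregman distance in $X$: $D_p(x,z)=\tfrac1{p^*}\|x\|^p-\langle J_p(x),z\rangle+\tfrac1p\|z\|^p$; $\Pi^X_C(x)$ is the minimizer of $D_p(x,\cdot)$ over a closed convex nonempty $C\subset X$. In $X^*$ the Bregman distance is $D_{p^*}(x^*,z^* )=\tfrac1p\|x^*\|^{p^*}-\langle z^*,J_{p^*}(x^* )\rangle+\tfrac1{p^*}\|z^*\|^{p^*}$, and $\Pi^{X^*}_C(x^* )$ minimizes $D_{p^*}(x^*,\cdot)$ over closed convex $C\subset X^*$. Method: choose $x_0$ with $J_p(x_0)\in\overline{\mathcal{R}(A^* )}$, fix $N\in\mathbb{N}$, $N_n=\min(N,n+1)$, $V_{-1}=\{0\}$. For $n=0,1,\dots$: $w_n=Ax_n-y$, $R_n=\|w_n\|$; stop if $R_n=0$. Else $u_n^*=J_r^Y(w_n)$, $u_n=A^*u_n^*$. Let $s_n$ minimize $s\mapsto\|u_n-\sum_{i=1}^{N_{n-1}}s_iv_{n-1,i}\|^{p^*}$ (empty sum for $n=0$),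 set $v_{n,N_n}=u_n-\sum_k s_{n,k}v_{n-1,k}$ with precursor $w^*_{n,N_n}=u_n^*-\sum_k s_{n,k}w^*_{n-1,k}$; $v_{n,1},\dots,v_{n,N_n-1}$ with precursors are the last $N_n-1$ entries of the previous lists, in order ($v_{n,k}=A^*w^*_{n,k}$). $V_n=\mathrm{span}\{v_{n,1},\dots,v_{n,N_n}\}$, offsets $\beta_{n,k}=\langle w^*_{n,k},y\rangle$; $t_n$ minimizes $h_n(t)=\tfrac1{p^*}\|J_p(x_n)-\sum_k t_kv_{n,k}\|^{p^*}+\sum_k t_k\beta_{n,k}$; $x_{n+1}=J_{p^*}(J_p(x_n)-\sum_k t_{n,k}v_{n,k})$. *)

theory Defs
  imports "HOL-Analysis.Analysis"
begin

text \<open>The real Banach space X is a type of class banach; its dual X* is the type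
  of bounded linear functionals (a \<Rightarrow>L real) with the operator norm.\<close>

definition uniformly_convex :: "'a::real_normed_vector itself \<Rightarrow> bool" where
  "uniformly_convex _ \<longleftrightarrow>
     (\<forall>\<epsilon>>0. \<epsilon> \<le> 2 \<longrightarrow> (\<exists>\<delta>>0. \<forall>x y::'a. norm x \<le> 1 \<longrightarrow> norm y \<le> 1 \<longrightarrow>
        norm (x - y) \<ge> \<epsilon> \<longrightarrow> norm ((1/2) *\<^sub>R (x + y)) \<le> 1 - \<delta>))"

definition smooth_space :: "'a::real_normed_vector itself \<Rightarrow> bool" where
  "smooth_space _ \<longleftrightarrow>
     (\<forall>x::'a. x \<noteq> 0 \<longrightarrow> (\<exists>!f::'a \<Rightarrow>\<^sub>L real. norm f = 1 \<and> blinfun_apply f x = norm x))"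

definition conj_exp :: "real \<Rightarrow> real" where
  "conj_exp p = p / (p - 1)"

text \<open>Duality mapping J_p : X \<rightarrow> X* with gauge t^(p-1) (single valued since X is smooth).\<close>
definition Jp :: "real \<Rightarrow> 'a::real_normed_vector \<Rightarrow> ('a \<Rightarrow>\<^sub>L real)" where
  "Jp p x = (THE f. blinfun_apply f x = norm x powr p \<and> norm f = norm x powr (p - 1))"

text \<open>Duality mapping J_{p*} : X* \<rightarrow> X** = X (X reflexive) with gauge t^(p*-1).\<close>
definition Jpstar :: "real \<Rightarrow> ('a::real_normed_vector \<Rightarrow>\<^sub>L real) \<Rightarrow> 'a" where
  "Jpstar p xs = (THE x. blinfun_apply xs x = norm xs powr (conj_exp p)
                        \<and> norm x = norm xs powr (conj_exp p - 1))"

definition adj :: "('a::real_normed_vector \<Rightarrow>\<^sub>L 'b::real_normed_vector)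
                    \<Rightarrow> ('b \<Rightarrow>\<^sub>L real) \<Rightarrow> ('a \<Rightarrow>\<^sub>L real)" where
  "adj A u = u o\<^sub>L A"

definition Dp :: "real \<Rightarrow> 'a::real_normed_vector \<Rightarrow> 'a \<Rightarrow> real" where
  "Dp p x z = (1 / conj_exp p) * norm x powr p - blinfun_apply (Jp p x) z + (1 / p) * norm z powr p"

definition Dpstar :: "real \<Rightarrow> ('a::real_normed_vector \<Rightarrow>\<^sub>L real) \<Rightarrow> ('a \<Rightarrow>\<^sub>L real) \<Rightarrow> real" where
  "Dpstar p xs zs = (1 / p) * norm xs powr (conj_exp p) - blinfun_apply zs (Jpstar p xs)
                     + (1 / conj_exp p) * norm zs powr (conj_exp p)"

definition bproj :: "real \<Rightarrow> 'a::real_normed_vector set \<Rightarrow> 'a \<Rightarrow> 'a" where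
  "bproj p C x = (THE z. z \<in> C \<and> (\<forall>z'\<in>C. Dp p x z \<le> Dp p x z'))"

definition bprojstar :: "real \<Rightarrow> ('a::real_normed_vector \<Rightarrow>\<^sub>L real) set
                         \<Rightarrow> ('a \<Rightarrow>\<^sub>L real) \<Rightarrow> ('a \<Rightarrow>\<^sub>L real)" where
  "bprojstar p C xs = (THE z. z \<in> C \<and> (\<forall>z'\<in>C. Dpstar p xs z \<le> Dpstar p xs z'))"

definition hyperplane :: "('a::real_normed_vector \<Rightarrow>\<^sub>L real) \<Rightarrow> real \<Rightarrow> 'a set" where
  "hyperplane v \<beta> = {x. blinfun_apply v x = \<beta>}"

definition perp :: "('a::real_normed_vector \<Rightarrow>\<^sub>L real) set \<Rightarrow> 'a set" where
  "perp V = {x. \<forall>v\<in>V. blinfun_apply v x = 0}"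

definition Nn :: "nat \<Rightarrow> nat \<Rightarrow> nat" where
  "Nn N n = min N (Suc n)"

text \<open>Length of the previous list, N_{n-1}, with N_{-1} = 0 (V_{-1} = {0}).\<close>
definition Nprev :: "nat \<Rightarrow> nat \<Rightarrow> nat" where
  "Nprev N n = (if n = 0 then 0 else Nn N (n - 1))"

end

theory Submission
  imports Defs
begin

lemma conj_facts:
  assumes "1 < p"
  shows "1 < conj_exp p" "1/p + 1/conj_exp p = 1" "(conj_exp p - 1) * p = conj_exp p"
    "(p - 1) * conj_exp p = p" "(conj_exp p - 1) * (p - 1) = 1"
  using assms by (auto simp: conj_exp_def field_simps)

lemma powr_mid_strict:
  fixes a b r :: real assumes "0 \<le> a" "a < b" "1 < r"
  shows "((a+b)/2) powr r < (a powr r + b powr r)/2"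
proof -
  define m where "m = (a+b)/2"
  have m: "a < m" "m < b" "0 < m" using assms by (auto simp: m_def)
  have d: "\<And>x. 0 < x \<Longrightarrow> ((\<lambda>x. x powr r) has_real_derivative r * x powr (r-1)) (at x)"
    by (rule has_real_derivative_powr)
  obtain \<xi> where \<xi>: "m < \<xi>" "\<xi> < b" "b powr r - m powr r = (b - m) * (r * \<xi> powr (r-1))"
    using MVT2[of m b "\<lambda>x. x powr r" "\<lambda>x. r * x powr (r-1)"] m d by force
  show ?thesis
  proof (cases "a = 0")
    case True
    have "(2::real) powr 1 < 2 powr r" using assms by (intro powr_less_mono) auto
    hence "b powr r / 2 powr r < b powr r / 2" using assms True
      by (intro divide_strict_left_mono) auto
    thus ?thesis using True assms by (simp add: powr_divide)
  next
    case False
    hence a0: "0 < a" using assms by auto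
    obtain \<eta> where \<eta>: "a < \<eta>" "\<eta> < m" "m powr r - a powr r = (m - a) * (r * \<eta> powr (r-1))"
      using MVT2[of a m "\<lambda>x. x powr r" "\<lambda>x. r * x powr (r-1)"] m d a0 by force
    have "\<eta> powr (r-1) < \<xi> powr (r-1)" using \<eta> \<xi> a0 assms by (intro powr_less_mono2) auto
    hence "(m - a) * (r * \<eta> powr (r-1)) < (m - a) * (r * \<xi> powr (r-1))"
      using m assms by (intro mult_strict_left_mono) auto
    moreover have "b - m = m - a" by (simp add: m_def field_simps)
    ultimately have "(m - a) * (r * \<eta> powr (r-1)) < (b - m) * (r * \<xi> powr (r-1))" by simp
    thus ?thesis using \<eta> \<xi> by (simp add: m_def[symmetric])
  qed
qed

definition sc :: "'a::real_normed_vector itself \<Rightarrow> bool" where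
  "sc _ \<longleftrightarrow> (\<forall>a b::'a. norm a \<le> 1 \<longrightarrow> norm b \<le> 1 \<longrightarrow> 1 \<le> norm ((1/2) *\<^sub>R (a + b)) \<longrightarrow> a = b)"

lemma uc_sc:
  assumes "uniformly_convex TYPE('a::real_normed_vector)"
  shows "sc TYPE('a)"
  unfolding sc_def
proof (intro allI impI)
  fix a b :: 'a
  assume h: "norm a \<le> 1" "norm b \<le> 1" "1 \<le> norm ((1/2) *\<^sub>R (a + b))"
  show "a = b"
  proof (rule ccontr)
    assume "a \<noteq> b"
    define e where "e = norm (a - b)"
    have e: "0 < e" "e \<le> 2" using \<open>a \<noteq> b\<close> h norm_triangle_ineq4[of a b] by (auto simp: e_def)
    then obtain \<delta> where "\<delta> > 0" "\<And>x y::'a. norm x \<le> 1 \<Longrightarrow> norm y \<le> 1 \<Longrightarrow>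
        norm (x - y) \<ge> e \<Longrightarrow> norm ((1/2) *\<^sub>R (x + y)) \<le> 1 - \<delta>"
      using assms unfolding uniformly_convex_def by meson
    from this(2)[of a b] h show False using \<open>\<delta> > 0\<close> by (simp add: e_def)
  qed
qed

lemma sc_powr_strict:
  fixes z1 z2 :: "'a::real_normed_vector"
  assumes "sc TYPE('a)" "z1 \<noteq> z2" "1 < r"
  shows "norm ((1/2) *\<^sub>R (z1 + z2)) powr r < (norm z1 powr r + norm z2 powr r)/2"
proof -
  have tri: "norm ((1/2) *\<^sub>R (z1 + z2)) \<le> (norm z1 + norm z2)/2"
    using norm_triangle_ineq[of z1 z2] by simp
  show ?thesis
  proof (cases "norm z1 = norm z2")
    case True
    define R where "R = norm z1"
    have R0: "R > 0"
    proof (rule ccontr)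
      assume "\<not> R > 0" hence "R = 0" by (simp add: R_def)
      thus False using True assms(2) by (simp add: R_def)
    qed
    have "norm ((1/2) *\<^sub>R (z1 + z2)) < R"
    proof (rule ccontr)
      assume "\<not> ?thesis"
      hence "1 \<le> norm ((1/2) *\<^sub>R (z1 /\<^sub>R R + z2 /\<^sub>R R))" using R0
        by (simp add: scaleR_add_right[symmetric] del: scaleR_add_right) (simp add: field_simps)
      moreover have "norm (z1 /\<^sub>R R) \<le> 1" "norm (z2 /\<^sub>R R) \<le> 1" using R0 True by (auto simp: R_def)
      ultimately have "z1 /\<^sub>R R = z2 /\<^sub>R R" using assms(1) unfolding sc_def by blast
      thus False using R0 assms(2) by simp
    qed
    hence "norm ((1/2) *\<^sub>R (z1 + z2)) powr r < R powr r" using assms(3)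
      by (intro powr_less_mono2) auto
    thus ?thesis using True by (simp add: R_def)
  next
    case False
    have "norm ((1/2) *\<^sub>R (z1 + z2)) powr r \<le> ((norm z1 + norm z2)/2) powr r"
      using tri assms(3) by (intro powr_mono2) auto
    also have "\<dots> < (norm z1 powr r + norm z2 powr r)/2"
    proof (cases "norm z1 < norm z2")
      case True thus ?thesis using powr_mid_strict[of "norm z1" "norm z2" r] assms by auto
    next
      case False
      hence "norm z2 < norm z1" using \<open>norm z1 \<noteq> norm z2\<close> by auto
      thus ?thesis using powr_mid_strict[of "norm z2" "norm z1" r] assms by (auto simp: add.commute)
    qed
    finally show ?thesis .
  qed
qed

lemma unique_min:
  fixes L :: "'a::real_normed_vector \<Rightarrow> real"
  assumes "sc TYPE('a)" "convex C" "1 < r" "0 < c"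
    and lin: "\<And>a b. L ((1/2) *\<^sub>R (a + b)) = (L a + L b)/2"
    and "z1 \<in> C" "z2 \<in> C"
    and m1: "\<And>z. z \<in> C \<Longrightarrow> L z1 + c * norm z1 powr r \<le> L z + c * norm z powr r"
    and m2: "\<And>z. z \<in> C \<Longrightarrow> L z2 + c * norm z2 powr r \<le> L z + c * norm z powr r"
  shows "z1 = z2"
proof (rule ccontr)
  assume ne: "z1 \<noteq> z2"
  define m where "m = (1/2) *\<^sub>R (z1 + z2)"
  have "m \<in> C" using assms(2,6,7) unfolding m_def convex_def
    by (metis (no_types, lifting) add_divide_distrib divide_self_if scaleR_add_right zero_le_divide_1_iff zero_le_numeral zero_neq_numeral one_add_one field_sum_of_halves)
  have "norm m powr r < (norm z1 powr r + norm z2 powr r)/2"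
    using sc_powr_strict[OF assms(1) ne assms(3)] by (simp add: m_def)
  hence "c * norm m powr r < c * ((norm z1 powr r + norm z2 powr r)/2)"
    using assms(4) by (intro mult_strict_left_mono) auto
  hence "L m + c * norm m powr r < (L z1 + c * norm z1 powr r + (L z2 + c * norm z2 powr r))/2"
    using lin[of z1 z2] by (simp add: m_def field_simps)
  moreover have "L z1 + c * norm z1 powr r \<le> L m + c * norm m powr r"
    "L z2 + c * norm z2 powr r \<le> L m + c * norm m powr r" using m1 m2 \<open>m \<in> C\<close> by auto
  moreover have aux: "\<And>F1 F2 Fm::real. Fm < (F1 + F2)/2 \<Longrightarrow> F1 \<le> Fm \<Longrightarrow> F2 \<le> Fm \<Longrightarrow> False"
    by (auto simp: field_simps)
  ultimately show False by blast
qed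

lemma approx_norm:
  fixes f :: "'a::real_normed_vector \<Rightarrow>\<^sub>L real"
  assumes "0 < \<epsilon>"
  shows "\<exists>x. norm x \<le> 1 \<and> f x > norm f - \<epsilon>"
proof (rule ccontr)
  assume "\<not> ?thesis"
  hence H: "\<And>x. norm x \<le> 1 \<Longrightarrow> f x \<le> norm f - \<epsilon>" by (auto simp: not_less)
  have nn: "0 \<le> norm f - \<epsilon>" using H[of 0] by simp
  have "norm f \<le> norm f - \<epsilon>"
  proof (rule norm_blinfun_bound[OF nn])
    fix x :: 'a
    show "norm (f x) \<le> (norm f - \<epsilon>) * norm x"
    proof (cases "x = 0")
      case False
      have a: "f (x /\<^sub>R norm x) \<le> norm f - \<epsilon>" "f (- (x /\<^sub>R norm x)) \<le> norm f - \<epsilon>"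
        using H False by auto
      have "f (x /\<^sub>R norm x) = f x / norm x" "f (- (x /\<^sub>R norm x)) = - f x / norm x"
        by (auto simp: blinfun.scaleR_right blinfun.minus_right divide_inverse mult.commute)
      with a False have 1: "f x \<le> (norm f - \<epsilon>) * norm x" "- (f x / norm x) \<le> (norm f - \<epsilon>)"
        by (auto simp: divide_le_eq)
      have "- f x = (- (f x / norm x)) * norm x" using False by simp
      also have "\<dots> \<le> (norm f - \<epsilon>) * norm x" using 1(2) by (rule mult_right_mono) simp
      finally have "- f x \<le> (norm f - \<epsilon>) * norm x" .
      thus ?thesis using 1(1) by auto
    qed simp
  qed
  thus False using assms by simp
qed

lemma norm_attain:
  fixes f :: "'a::banach \<Rightarrow>\<^sub>L real"
  assumes uc: "uniformly_convex TYPE('a)" and f0: "f \<noteq> 0"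
  shows "\<exists>e. norm e = 1 \<and> f e = norm f"
proof -
  have nf: "norm f > 0" using f0 by simp
  have "\<forall>k. \<exists>x. norm x \<le> 1 \<and> f x > norm f - inverse (real (Suc k))"
    using approx_norm[of "inverse (real (Suc k))" f for k] by auto
  then obtain X where X: "\<And>k. norm (X k) \<le> 1" "\<And>k. f (X k) > norm f - inverse (real (Suc k))"
    by metis
  have fle: "\<And>z. f z \<le> norm f * norm z"
    using norm_blinfun[of f] by (metis abs_le_D1 real_norm_def)
  have "Cauchy X"
  proof (rule CauchyI)
    fix e :: real assume "0 < e"
    define \<epsilon> where "\<epsilon> = min e 2"
    have "0 < \<epsilon>" "\<epsilon> \<le> 2" using \<open>0 < e\<close> by (auto simp: \<epsilon>_def)
    then obtain \<delta> where d: "\<delta> > 0" "\<And>x y::'a. norm x \<le> 1 \<Longrightarrow> norm y \<le> 1 \<Longrightarrow>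
        norm (x - y) \<ge> \<epsilon> \<Longrightarrow> norm ((1/2) *\<^sub>R (x + y)) \<le> 1 - \<delta>"
      using uc unfolding uniformly_convex_def by meson
    obtain M0 where M0: "M0 > 0" "inverse (real M0) < norm f * \<delta>"
      using ex_inverse_of_nat_less[of "norm f * \<delta>"] nf d(1) by auto
    define M where "M = M0"
    have M: "inverse (real (Suc M)) < norm f * \<delta>"
      using M0 by (smt (verit) M_def le_imp_inverse_le of_nat_0_less_iff of_nat_Suc)
    have "\<forall>m\<ge>M. \<forall>n\<ge>M. norm (X m - X n) < e"
    proof (intro allI impI)
      fix m n assume mn: "M \<le> m" "M \<le> n"
      have "inverse (real (Suc m)) \<le> inverse (real (Suc M))" "inverse (real (Suc n)) \<le> inverse (real (Suc M))"
        using mn by (auto intro!: le_imp_inverse_le)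
      hence lo: "f (X m) > norm f - norm f * \<delta>" "f (X n) > norm f - norm f * \<delta>"
        using X(2)[of m] X(2)[of n] M by linarith+
      show "norm (X m - X n) < e"
      proof (rule ccontr)
        assume "\<not> ?thesis"
        hence "norm (X m - X n) \<ge> \<epsilon>" by (simp add: \<epsilon>_def)
        hence "norm ((1/2) *\<^sub>R (X m + X n)) \<le> 1 - \<delta>" using d X by blast
        hence "f ((1/2) *\<^sub>R (X m + X n)) \<le> norm f * (1 - \<delta>)"
          using fle[of "(1/2) *\<^sub>R (X m + X n)"] nf by (smt (verit) mult_left_mono)
        moreover have "f ((1/2) *\<^sub>R (X m + X n)) = (f (X m) + f (X n))/2"
          by (simp add: blinfun.scaleR_right blinfun.add_right)
        ultimately show False using lo by (simp add: algebra_simps)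
      qed
    qed
    thus "\<exists>M. \<forall>m\<ge>M. \<forall>n\<ge>M. norm (X m - X n) < e" by blast
  qed
  then obtain l where l: "X \<longlonglongrightarrow> l" using Cauchy_convergent_iff convergent_def by blast
  have nl: "norm l \<le> 1"
    using tendsto_norm[OF l] X(1) by (intro LIMSEQ_le_const2) auto
  have fl: "(\<lambda>k. f (X k)) \<longlonglongrightarrow> f l"
    using l by (intro tendsto_intros)
  have fX: "\<And>k. f (X k) \<le> norm f" using fle X(1)
    by (metis mult_left_le norm_ge_zero order_trans)
  have "f l \<le> norm f" using fX
    by (intro LIMSEQ_le_const2[OF fl]) auto
  moreover have "norm f \<le> f l"
  proof (rule LIMSEQ_le[of "\<lambda>k. norm f - inverse (real (Suc k))" _ "\<lambda>k. f (X k)"])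
    show "(\<lambda>k. norm f - inverse (real (Suc k))) \<longlonglongrightarrow> norm f"
      using tendsto_diff[OF tendsto_const LIMSEQ_inverse_real_of_nat] by simp
  qed (use fl X(2) less_imp_le in auto)
  ultimately have "f l = norm f" by simp
  moreover have "norm l = 1"
  proof -
    have "norm f \<le> norm f * norm l" using fle[of l] \<open>f l = norm f\<close> by simp
    thus ?thesis using nf nl by (simp add: mult_le_cancel_left1)
  qed
  ultimately show ?thesis by blast
qed

lemma Jp_ex1:
  fixes x :: "'a::real_normed_vector"
  assumes sm: "smooth_space TYPE('a)" and p: "1 < p"
  shows "\<exists>!f. blinfun_apply f x = norm x powr p \<and> norm f = norm x powr (p - 1)"
proof (cases "x = 0")
  case True thus ?thesis using p by (auto intro!: exI[of _ 0])
next
  case False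
  define c where "c = norm x powr (p - 1)"
  have c: "c > 0" using False by (simp add: c_def)
  have cx: "c * norm x = norm x powr p" using False
    by (simp add: c_def powr_add[symmetric] flip: powr_add) (metis powr_add powr_one_gt_zero_iff add.commute diff_add_cancel norm_ge_zero powr_one)
  obtain g where g: "norm g = 1" "blinfun_apply g x = norm x"
    and gu: "\<And>h. norm h = 1 \<Longrightarrow> blinfun_apply h x = norm x \<Longrightarrow> h = g"
    using sm False unfolding smooth_space_def by metis
  show ?thesis
  proof (rule ex1I[of _ "c *\<^sub>R g"])
    show "blinfun_apply (c *\<^sub>R g) x = norm x powr p \<and> norm (c *\<^sub>R g) = norm x powr (p - 1)"
      using g c cx by (simp add: c_def blinfun.scaleR_left)
  next
    fix f assume f: "blinfun_apply f x = norm x powr p \<and> norm f = norm x powr (p - 1)"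
    have "f /\<^sub>R c = g"
      by (rule gu) (use f c cx in \<open>auto simp: c_def field_simps blinfun.scaleR_left\<close>)
    thus "f = c *\<^sub>R g" using c by auto
  qed
qed

lemma Jp_props:
  fixes x :: "'a::real_normed_vector"
  assumes "smooth_space TYPE('a)" "1 < p"
  shows "blinfun_apply (Jp p x) x = norm x powr p" "norm (Jp p x) = norm x powr (p - 1)"
  using theI'[OF Jp_ex1[OF assms, of x]] unfolding Jp_def by auto

lemma Jp_unique:
  fixes x :: "'a::real_normed_vector"
  assumes "smooth_space TYPE('a)" "1 < p"
    and "blinfun_apply f x = norm x powr p" "norm f = norm x powr (p - 1)"
  shows "Jp p x = f"
  unfolding Jp_def using Jp_ex1[OF assms(1,2), of x] assms(3,4) by (intro the1_equality) auto

lemma Jpstar_ex1: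
  fixes xs :: "'a::banach \<Rightarrow>\<^sub>L real"
  assumes uc: "uniformly_convex TYPE('a)" and p: "1 < p"
  shows "\<exists>!x. blinfun_apply xs x = norm xs powr (conj_exp p) \<and> norm x = norm xs powr (conj_exp p - 1)"
proof (cases "xs = 0")
  case True thus ?thesis using conj_facts[OF p] by (auto intro!: exI[of _ 0])
next
  case False
  define q where "q = conj_exp p"
  have q: "1 < q" using conj_facts[OF p] by (simp add: q_def)
  define R where "R = norm xs powr (q - 1)"
  have R: "R > 0" using False by (simp add: R_def)
  have Rx: "R * norm xs = norm xs powr q" using False
    by (simp add: R_def) (metis powr_add add.commute diff_add_cancel norm_ge_zero powr_one)
  obtain e where e: "norm e = 1" "blinfun_apply xs e = norm xs" using norm_attain[OF uc False] by blast
  have sc: "sc TYPE('a)" by (rule uc_sc[OF uc])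
  show ?thesis unfolding q_def[symmetric]
  proof (rule ex1I[of _ "R *\<^sub>R e"])
    show "blinfun_apply xs (R *\<^sub>R e) = norm xs powr q \<and> norm (R *\<^sub>R e) = norm xs powr (q - 1)"
      using e R Rx by (simp add: R_def blinfun.scaleR_right)
  next
    fix x assume x: "blinfun_apply xs x = norm xs powr q \<and> norm x = norm xs powr (q - 1)"
    have n1: "norm (x /\<^sub>R R) \<le> 1" using x R by (simp add: R_def)
    have n2: "norm e \<le> 1" using e by simp
    have "norm xs = blinfun_apply xs ((1/2) *\<^sub>R (x /\<^sub>R R + e))"
      using x e R Rx by (simp add: blinfun.scaleR_right blinfun.add_right field_simps)
    also have "\<dots> \<le> norm xs * norm ((1/2) *\<^sub>R (x /\<^sub>R R + e))"
      using norm_blinfun[of xs] by (metis abs_le_D1 real_norm_def order_trans)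
    finally have "1 \<le> norm ((1/2) *\<^sub>R (x /\<^sub>R R + e))" using False by simp
    hence "x /\<^sub>R R = e" using sc n1 n2 unfolding sc_def by blast
    thus "x = R *\<^sub>R e" using R by auto
  qed
qed

lemma Jpstar_props:
  fixes xs :: "'a::banach \<Rightarrow>\<^sub>L real"
  assumes "uniformly_convex TYPE('a)" "1 < p"
  shows "blinfun_apply xs (Jpstar p xs) = norm xs powr (conj_exp p)"
    "norm (Jpstar p xs) = norm xs powr (conj_exp p - 1)"
  using theI'[OF Jpstar_ex1[OF assms, of xs]] unfolding Jpstar_def by auto

lemma Jpstar_unique:
  fixes xs :: "'a::banach \<Rightarrow>\<^sub>L real"
  assumes "uniformly_convex TYPE('a)" "1 < p"
    and "blinfun_apply xs x = norm xs powr (conj_exp p)" "norm x = norm xs powr (conj_exp p - 1)"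
  shows "Jpstar p xs = x"
  unfolding Jpstar_def using Jpstar_ex1[OF assms(1,2), of xs] assms(3,4) by (intro the1_equality) auto

lemma Jp_Jpstar:
  fixes xs :: "'a::banach \<Rightarrow>\<^sub>L real"
  assumes "uniformly_convex TYPE('a)" "smooth_space TYPE('a)" "1 < p"
  shows "Jp p (Jpstar p xs) = xs"
proof (rule Jp_unique[OF assms(2,3)])
  note cf = conj_facts[OF assms(3)]
  show "blinfun_apply xs (Jpstar p xs) = norm (Jpstar p xs) powr p"
    using Jpstar_props[OF assms(1,3), of xs] cf by (simp add: powr_powr)
  show "norm xs = norm (Jpstar p xs) powr (p - 1)"
    using Jpstar_props[OF assms(1,3), of xs] cf by (simp add: powr_powr)
qed

lemma Jpstar_Jp:
  fixes x :: "'a::banach"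
  assumes "uniformly_convex TYPE('a)" "smooth_space TYPE('a)" "1 < p"
  shows "Jpstar p (Jp p x) = x"
proof (rule Jpstar_unique[OF assms(1,3)])
  note cf = conj_facts[OF assms(3)]
  show "blinfun_apply (Jp p x) x = norm (Jp p x) powr conj_exp p"
    using Jp_props[OF assms(2,3), of x] cf by (simp add: powr_powr mult.commute)
  show "norm x = norm (Jp p x) powr (conj_exp p - 1)"
    using Jp_props[OF assms(2,3), of x] cf by (simp add: powr_powr mult.commute)
qed

lemma sc_dual:
  assumes uc: "uniformly_convex TYPE('a::banach)" and sm: "smooth_space TYPE('a)"
  shows "sc TYPE('a \<Rightarrow>\<^sub>L real)"
  unfolding sc_def
proof (intro allI impI)
  fix f g :: "'a \<Rightarrow>\<^sub>L real"
  assume h: "norm f \<le> 1" "norm g \<le> 1" "1 \<le> norm ((1/2) *\<^sub>R (f + g))"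
  define hh where "hh = (1/2) *\<^sub>R (f + g)"
  have "hh \<noteq> 0" using h by (auto simp: hh_def)
  then obtain e where e: "norm e = 1" "blinfun_apply hh e = norm hh" using norm_attain[OF uc] by blast
  have fle: "\<And>k::'a \<Rightarrow>\<^sub>L real. blinfun_apply k e \<le> norm k"
    using norm_blinfun e(1) by (metis abs_le_D1 real_norm_def mult.right_neutral)
  have "blinfun_apply hh e = (f e + g e)/2" by (simp add: hh_def blinfun.add_left blinfun.scaleR_left)
  hence fe: "f e = 1" "g e = 1" using fle[of f] fle[of g] h e(2) by (auto simp: hh_def)
  have nf: "norm f = 1" "norm g = 1" using fe fle[of f] fle[of g] h by auto
  obtain k where "\<And>k'. norm k' = 1 \<and> blinfun_apply k' e = norm e \<Longrightarrow> k' = k"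
    using sm e unfolding smooth_space_def by (metis norm_zero zero_neq_one)
  thus "f = g" using fe nf e by metis
qed

lemma subgrad_X:
  fixes z w :: "'a::real_normed_vector"
  assumes sm: "smooth_space TYPE('a)" and p: "1 < p"
  shows "(1/p) * norm z powr p + blinfun_apply (Jp p z) (w - z) \<le> (1/p) * norm w powr p"
proof -
  note cf = conj_facts[OF p]
  define q where "q = conj_exp p"
  have "blinfun_apply (Jp p z) w \<le> norm (Jp p z) * norm w"
    using norm_blinfun[of "Jp p z" w] by (metis abs_le_D1 real_norm_def)
  also have "\<dots> = norm z powr (p - 1) * norm w" using Jp_props[OF sm p] by simp
  also have "\<dots> \<le> (norm z powr (p - 1)) powr q / q + norm w powr p / p"
    using Youngs_inequality[of q p "norm z powr (p - 1)" "norm w"] cf p by (simp add: q_def add.commute)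
  also have "(norm z powr (p - 1)) powr q = norm z powr p" using cf by (simp add: powr_powr q_def)
  finally have "blinfun_apply (Jp p z) w \<le> norm z powr p / q + norm w powr p / p" .
  moreover have "norm z powr p / q = norm z powr p - norm z powr p / p"
  proof -
    have "1/q = 1 - 1/p" using cf by (simp add: q_def)
    hence "norm z powr p * (1/q) = norm z powr p * (1 - 1/p)" by simp
    thus ?thesis by (simp add: right_diff_distrib)
  qed
  ultimately show ?thesis using Jp_props(1)[OF sm p, of z]
    by (simp add: blinfun.diff_right)
qed

lemma subgrad_Xs:
  fixes c d :: "'a::banach \<Rightarrow>\<^sub>L real"
  assumes uc: "uniformly_convex TYPE('a)" and p: "1 < p"
  shows "(1/conj_exp p) * norm c powr conj_exp p + blinfun_apply (d - c) (Jpstar p c)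
           \<le> (1/conj_exp p) * norm d powr conj_exp p"
proof -
  note cf = conj_facts[OF p]
  define q where "q = conj_exp p"
  have "blinfun_apply d (Jpstar p c) \<le> norm d * norm (Jpstar p c)"
    using norm_blinfun[of d "Jpstar p c"] by (metis abs_le_D1 real_norm_def)
  also have "\<dots> = norm d * norm c powr (q - 1)" using Jpstar_props[OF uc p] by (simp add: q_def)
  also have "\<dots> \<le> norm d powr q / q + (norm c powr (q - 1)) powr p / p"
    using Youngs_inequality[of q p "norm d" "norm c powr (q - 1)"] cf p by (simp add: q_def add.commute)
  also have "(norm c powr (q - 1)) powr p = norm c powr q" using cf by (simp add: powr_powr q_def)
  finally have "blinfun_apply d (Jpstar p c) \<le> norm d powr q / q + norm c powr q / p" .
  moreover have "norm c powr q / p = norm c powr q - norm c powr q / q"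
  proof -
    have "1/p = 1 - 1/q" using cf by (simp add: q_def)
    hence "norm c powr q * (1/p) = norm c powr q * (1 - 1/q)" by simp
    thus ?thesis by (simp add: right_diff_distrib)
  qed
  ultimately show ?thesis using Jpstar_props(1)[OF uc p, of c]
    by (simp add: blinfun.diff_left q_def)
qed

lemma Jpstar_tendsto:
  fixes c :: "'i \<Rightarrow> ('a::banach \<Rightarrow>\<^sub>L real)"
  assumes uc: "uniformly_convex TYPE('a)" and p: "1 < p" and lim: "(c \<longlongrightarrow> c0) F"
  shows "((\<lambda>i. Jpstar p (c i)) \<longlongrightarrow> Jpstar p c0) F"
proof -
  note cf = conj_facts[OF p]
  define q where "q = conj_exp p"
  have q: "1 < q" using cf by (simp add: q_def)
  define w where "w = (\<lambda>i. Jpstar p (c i))"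
  define w0 where "w0 = Jpstar p c0"
  have nw: "\<And>i. norm (w i) = norm (c i) powr (q - 1)" using Jpstar_props[OF uc p] by (simp add: w_def q_def)
  have cw: "\<And>i. blinfun_apply (c i) (w i) = norm (c i) powr q" using Jpstar_props[OF uc p] by (simp add: w_def q_def)
  have nw0: "norm w0 = norm c0 powr (q - 1)" using Jpstar_props[OF uc p] by (simp add: w0_def q_def)
  have cw0: "blinfun_apply c0 w0 = norm c0 powr q" using Jpstar_props[OF uc p] by (simp add: w0_def q_def)
  have lnw: "((\<lambda>i. norm (w i)) \<longlongrightarrow> norm c0 powr (q - 1)) F"
    unfolding nw using q by (intro tendsto_intros lim) auto
  show ?thesis unfolding w_def[symmetric] w0_def[symmetric]
  proof (cases "c0 = 0")
    case True
    hence "w0 = 0" using nw0 by simp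
    moreover have "((\<lambda>i. norm (w i)) \<longlongrightarrow> 0) F" using lnw True by simp
    ultimately show "(w \<longlongrightarrow> w0) F" by (simp add: tendsto_norm_zero_iff)
  next
    case False
    define R0 where "R0 = norm c0 powr (q - 1)"
    have R0: "R0 > 0" using False by (simp add: R0_def)
    have R0x: "R0 * norm c0 = norm c0 powr q" using False
      by (simp add: R0_def) (metis powr_add add.commute diff_add_cancel norm_ge_zero powr_one)
    have ev: "eventually (\<lambda>i. norm (w i) < R0 + 1) F"
      using lnw by (intro order_tendstoD) (auto simp: R0_def)
    have err: "((\<lambda>i. blinfun_apply (c0 - c i) (w i)) \<longlongrightarrow> 0) F"
    proof (rule tendsto_0_le[where f="\<lambda>i. c i - c0" and K="R0 + 1"])
      show "((\<lambda>i. c i - c0) \<longlongrightarrow> 0) F" using lim by (simp add: LIM_zero)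
      show "eventually (\<lambda>i. norm (blinfun_apply (c0 - c i) (w i)) \<le> norm (c i - c0) * (R0 + 1)) F"
        using ev
      proof eventually_elim
        case (elim i)
        have "norm (blinfun_apply (c0 - c i) (w i)) \<le> norm (c0 - c i) * norm (w i)" by (rule norm_blinfun)
        also have "\<dots> \<le> norm (c i - c0) * (R0 + 1)" using elim
          by (simp add: norm_minus_commute mult_left_mono)
        finally show ?case .
      qed
    qed
    have c0w: "((\<lambda>i. blinfun_apply c0 (w i)) \<longlongrightarrow> norm c0 powr q) F"
    proof -
      have "((\<lambda>i. norm (c i) powr q + blinfun_apply (c0 - c i) (w i)) \<longlongrightarrow> norm c0 powr q + 0) F"
        using q by (intro tendsto_intros lim err) auto
      moreover have "\<And>i. norm (c i) powr q + blinfun_apply (c0 - c i) (w i) = blinfun_apply c0 (w i)"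
        using cw by (simp add: blinfun.diff_left)
      ultimately show ?thesis by simp
    qed
    define a where "a = (\<lambda>i. w i /\<^sub>R norm (w i))"
    define a0 where "a0 = w0 /\<^sub>R R0"
    have na: "\<And>i. norm (a i) \<le> 1" subgoal for i by (cases "w i = 0") (auto simp: a_def) done
    have na0: "norm a0 = 1" using nw0 R0 by (simp add: a0_def R0_def)
    have c0a0: "blinfun_apply c0 a0 = norm c0" using cw0 R0 R0x
      by (simp add: a0_def blinfun.scaleR_right field_simps)
    have c0a: "((\<lambda>i. blinfun_apply c0 (a i)) \<longlongrightarrow> norm c0) F"
    proof -
      have "((\<lambda>i. blinfun_apply c0 (w i) / norm (w i)) \<longlongrightarrow> norm c0 powr q / R0) F"
        using R0 by (intro tendsto_intros c0w) (use lnw in \<open>auto simp: R0_def\<close>)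
      moreover have "norm c0 powr q / R0 = norm c0" using R0 R0x by (simp add: field_simps)
      ultimately show ?thesis by (simp add: a_def blinfun.scaleR_right divide_inverse mult.commute)
    qed
    have nc0: "norm c0 > 0" using False by simp
    have aconv: "(a \<longlongrightarrow> a0) F"
    proof (rule tendstoI)
      fix e :: real assume "0 < e"
      define \<epsilon> where "\<epsilon> = min e 2"
      have "0 < \<epsilon>" "\<epsilon> \<le> 2" using \<open>0 < e\<close> by (auto simp: \<epsilon>_def)
      then obtain \<delta> where d: "\<delta> > 0" "\<And>x y::'a. norm x \<le> 1 \<Longrightarrow> norm y \<le> 1 \<Longrightarrow>
          norm (x - y) \<ge> \<epsilon> \<Longrightarrow> norm ((1/2) *\<^sub>R (x + y)) \<le> 1 - \<delta>"
        using uc unfolding uniformly_convex_def by meson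
      have "eventually (\<lambda>i. blinfun_apply c0 (a i) > norm c0 * (1 - 2 * \<delta>)) F"
        using c0a by (rule order_tendstoD) (use nc0 d(1) in simp)
      thus "eventually (\<lambda>i. dist (a i) a0 < e) F"
      proof eventually_elim
        case (elim i)
        show ?case
        proof (rule ccontr)
          assume "\<not> ?thesis"
          hence "norm (a i - a0) \<ge> \<epsilon>" by (simp add: dist_norm \<epsilon>_def)
          hence "norm ((1/2) *\<^sub>R (a i + a0)) \<le> 1 - \<delta>" using d(2) na na0 by simp
          hence "blinfun_apply c0 ((1/2) *\<^sub>R (a i + a0)) \<le> norm c0 * (1 - \<delta>)"
            using norm_blinfun[of c0 "(1/2) *\<^sub>R (a i + a0)"] nc0
            by (smt (verit) abs_le_D1 real_norm_def mult_left_mono)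
          moreover have "blinfun_apply c0 ((1/2) *\<^sub>R (a i + a0)) = (blinfun_apply c0 (a i) + norm c0)/2"
            using c0a0 by (simp add: blinfun.scaleR_right blinfun.add_right)
          ultimately show False using elim by (simp add: algebra_simps)
        qed
      qed
    qed
    have "((\<lambda>i. norm (w i) *\<^sub>R a i) \<longlongrightarrow> R0 *\<^sub>R a0) F"
      using lnw aconv by (intro tendsto_intros) (auto simp: R0_def)
    moreover have "\<And>i. norm (w i) *\<^sub>R a i = w i" subgoal for i by (cases "w i = 0") (auto simp: a_def) done
    moreover have "R0 *\<^sub>R a0 = w0" using R0 by (simp add: a0_def)
    ultimately show "(w \<longlongrightarrow> w0) F" by simp
  qed
qed

lemma opt_1d:
  fixes a b :: "'a::banach \<Rightarrow>\<^sub>L real"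
  assumes uc: "uniformly_convex TYPE('a)" and p: "1 < p"
    and H: "\<And>\<tau>. (1/conj_exp p) * norm a powr conj_exp p
             \<le> (1/conj_exp p) * norm (a - \<tau> *\<^sub>R b) powr conj_exp p + \<tau> * \<beta>"
  shows "blinfun_apply b (Jpstar p a) = \<beta>"
proof -
  define w where "w = (\<lambda>\<tau>::real. Jpstar p (a - \<tau> *\<^sub>R b))"
  have key: "\<And>\<tau>. \<tau> * blinfun_apply b (w \<tau>) \<le> \<tau> * \<beta>"
  proof -
    fix \<tau> :: real
    have "(1/conj_exp p) * norm (a - \<tau> *\<^sub>R b) powr conj_exp p + blinfun_apply (a - (a - \<tau> *\<^sub>R b)) (w \<tau>)
           \<le> (1/conj_exp p) * norm a powr conj_exp p"
      unfolding w_def by (rule subgrad_Xs[OF uc p])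
    thus "\<tau> * blinfun_apply b (w \<tau>) \<le> \<tau> * \<beta>" using H[of \<tau>] by (simp add: blinfun.scaleR_left)
  qed
  have lim: "\<And>F. F \<le> at 0 \<Longrightarrow> ((\<lambda>\<tau>. blinfun_apply b (w \<tau>)) \<longlongrightarrow> blinfun_apply b (Jpstar p a)) F"
  proof -
    fix F :: "real filter" assume F: "F \<le> at 0"
    have "((\<lambda>\<tau>::real. a - \<tau> *\<^sub>R b) \<longlongrightarrow> a - 0 *\<^sub>R b) (at 0)" by (intro tendsto_intros)
    hence "((\<lambda>\<tau>::real. a - \<tau> *\<^sub>R b) \<longlongrightarrow> a) F" using F by (simp add: tendsto_mono)
    hence "(w \<longlongrightarrow> Jpstar p a) F" unfolding w_def by (rule Jpstar_tendsto[OF uc p])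
    thus "((\<lambda>\<tau>. blinfun_apply b (w \<tau>)) \<longlongrightarrow> blinfun_apply b (Jpstar p a)) F" by (intro tendsto_intros)
  qed
  have "blinfun_apply b (Jpstar p a) \<le> \<beta>"
  proof (rule tendsto_upperbound[OF lim[of "at_right 0"]])
    show "at_right (0::real) \<le> at 0" by (simp add: at_le)
    show "eventually (\<lambda>\<tau>. blinfun_apply b (w \<tau>) \<le> \<beta>) (at_right (0::real))"
      unfolding eventually_at_filter by (rule always_eventually) (use key in \<open>auto simp: mult_le_cancel_left\<close>)
  qed simp
  moreover have "\<beta> \<le> blinfun_apply b (Jpstar p a)"
  proof (rule tendsto_lowerbound[OF lim[of "at_left 0"]])
    show "at_left (0::real) \<le> at 0" by (simp add: at_le)
    show "eventually (\<lambda>\<tau>. \<beta> \<le> blinfun_apply b (w \<tau>)) (at_left (0::real))"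
      unfolding eventually_at_filter by (rule always_eventually) (use key in \<open>auto simp: mult_le_cancel_left\<close>)
  qed simp
  ultimately show ?thesis by simp
qed

lemma adj_apply[simp]: "blinfun_apply (adj A u) z = blinfun_apply u (blinfun_apply A z)"
  by (simp add: adj_def)

lemma adj_diff: "adj A (a - b) = adj A a - adj A b"
  by (rule blinfun_eqI) (simp add: blinfun.diff_left)

lemma adj_sum: "adj A (\<Sum>k\<in>S. c k *\<^sub>R w k) = (\<Sum>k\<in>S. c k *\<^sub>R adj A (w k))"
  by (rule blinfun_eqI) (simp add: blinfun.sum_left blinfun.scaleR_left)

lemma subspace_range_adj: "subspace (range (adj A))"
  unfolding subspace_def
proof (intro conjI ballI allI)
  show "0 \<in> range (adj A)" by (rule image_eqI[of _ _ 0]) (auto intro: blinfun_eqI)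
  fix a b assume "a \<in> range (adj A)" "b \<in> range (adj A)"
  then obtain u w where "a = adj A u" "b = adj A w" by auto
  thus "a + b \<in> range (adj A)"
    by (intro image_eqI[of _ _ "u + w"]) (auto intro: blinfun_eqI simp: blinfun.add_left)
next
  fix c :: real and a assume "a \<in> range (adj A)"
  then obtain u where "a = adj A u" by auto
  thus "c *\<^sub>R a \<in> range (adj A)"
    by (intro image_eqI[of _ _ "c *\<^sub>R u"]) (auto intro: blinfun_eqI simp: blinfun.scaleR_left)
qed

lemma subspace_eq_at: "subspace {\<rho>::'a::real_normed_vector \<Rightarrow>\<^sub>L real. \<rho> z1 = \<rho> z2}"
  unfolding subspace_def by (simp add: blinfun.add_left blinfun.scaleR_left)

lemma convex_perp: "convex (perp V)"
  unfolding convex_def perp_def by (simp add: blinfun.add_right blinfun.scaleR_right)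

lemma convex_hyp: "convex (hyperplane v \<beta>)"
  unfolding convex_def hyperplane_def
  by (simp add: blinfun.add_right blinfun.scaleR_right distrib_right[symmetric])

lemma sum_bump:
  fixes g :: "nat \<Rightarrow> 'b::real_vector"
  assumes "finite S" "k \<in> S"
  shows "(\<Sum>k'\<in>S. (f k' + (if k' = k then \<tau> else 0)) *\<^sub>R g k') = (\<Sum>k'\<in>S. f k' *\<^sub>R g k') + \<tau> *\<^sub>R g k"
proof -
  have "\<And>k'. (f k' + (if k' = k then \<tau> else 0)) *\<^sub>R g k' = f k' *\<^sub>R g k' + (if k' = k then \<tau> *\<^sub>R g k else 0)"
    by (auto simp: scaleR_add_left)
  hence "(\<Sum>k'\<in>S. (f k' + (if k' = k then \<tau> else 0)) *\<^sub>R g k') = (\<Sum>k'\<in>S. f k' *\<^sub>R g k' + (if k' = k then \<tau> *\<^sub>R g k else 0))"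
    by (intro sum.cong) auto
  also have "\<dots> = (\<Sum>k'\<in>S. f k' *\<^sub>R g k') + \<tau> *\<^sub>R g k"
    using assms by (simp add: sum.distrib)
  finally show ?thesis .
qed

lemma sum_bump_r:
  fixes g :: "nat \<Rightarrow> real"
  assumes "finite S" "k \<in> S"
  shows "(\<Sum>k'\<in>S. (f k' + (if k' = k then \<tau> else 0)) * g k') = (\<Sum>k'\<in>S. f k' * g k') + \<tau> * g k"
proof -
  have "\<And>k'. (f k' + (if k' = k then \<tau> else 0)) * g k' = f k' * g k' + (if k' = k then \<tau> * g k else 0)"
    by (auto simp: distrib_right)
  hence "(\<Sum>k'\<in>S. (f k' + (if k' = k then \<tau> else 0)) * g k') = (\<Sum>k'\<in>S. f k' * g k' + (if k' = k then \<tau> * g k else 0))"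
    by (intro sum.cong) auto
  also have "\<dots> = (\<Sum>k'\<in>S. f k' * g k') + \<tau> * g k"
    using assms by (simp add: sum.distrib)
  finally show ?thesis .
qed

theorem mainTheorem6:
  fixes A :: "'a::banach \<Rightarrow>\<^sub>L 'b::banach"
    and y :: 'b and p r :: real and N :: nat
    and JY :: "'b \<Rightarrow> ('b \<Rightarrow>\<^sub>L real)"
    and x :: "nat \<Rightarrow> 'a"
    and ws :: "nat \<Rightarrow> nat \<Rightarrow> ('b \<Rightarrow>\<^sub>L real)"
    and s t :: "nat \<Rightarrow> nat \<Rightarrow> real"
    and n :: nat
  defines "M \<equiv> {z. blinfun_apply A z = y}"
    and "u \<equiv> \<lambda>m. adj A (JY (blinfun_apply A (x m) - y))"
    and "v \<equiv> \<lambda>m k. adj A (ws m k)"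
    and "\<beta> \<equiv> \<lambda>m k. blinfun_apply (ws m k) y"
    and "V \<equiv> \<lambda>m. span {adj A (ws m k) | k. k \<in> {1..Nn N m}}"
    and "H \<equiv> \<lambda>m. \<Inter>k\<in>{1..Nn N m}. hyperplane (adj A (ws m k)) (blinfun_apply (ws m k) y)"
  assumes X_uc: "uniformly_convex TYPE('a)"
    and X_smooth: "smooth_space TYPE('a)"
    and p_gt: "1 < p" and r_gt: "1 < r" and N_pos: "1 \<le> N"
    and y_range: "y \<in> range (blinfun_apply A)"
    and JY_dual: "\<And>w. blinfun_apply (JY w) w = norm w powr r \<and> norm (JY w) = norm w powr (r - 1)"
    and x0: "Jp p (x 0) \<in> closure (range (adj A))"
    \<comment> \<open>the iteration, as long as all residuals so far are nonzero\<close>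
    and s_min: "\<And>m. (\<forall>i\<le>m. blinfun_apply A (x i) \<noteq> y) \<Longrightarrow> (\<forall>s'.
         norm (u m - (\<Sum>k\<in>{1..Nprev N m}. s m k *\<^sub>R v (m - 1) k)) powr (conj_exp p)
       \<le> norm (u m - (\<Sum>k\<in>{1..Nprev N m}. s' k *\<^sub>R v (m - 1) k)) powr (conj_exp p))"
    and ws_new: "\<And>m. (\<forall>i\<le>m. blinfun_apply A (x i) \<noteq> y) \<Longrightarrow>
         ws m (Nn N m) = JY (blinfun_apply A (x m) - y)
                          - (\<Sum>k\<in>{1..Nprev N m}. s m k *\<^sub>R ws (m - 1) k)"
    and ws_old: "\<And>m k. (\<forall>i\<le>m. blinfun_apply A (x i) \<noteq> y) \<Longrightarrow> k \<in> {1..<Nn N m} \<Longrightarrow>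
         ws m k = ws (m - 1) (k + Nprev N m + 1 - Nn N m)"
    and t_min: "\<And>m. (\<forall>i\<le>m. blinfun_apply A (x i) \<noteq> y) \<Longrightarrow> (\<forall>t'.
         (1 / conj_exp p) * norm (Jp p (x m) - (\<Sum>k\<in>{1..Nn N m}. t m k *\<^sub>R v m k)) powr (conj_exp p)
           + (\<Sum>k\<in>{1..Nn N m}. t m k * \<beta> m k)
       \<le> (1 / conj_exp p) * norm (Jp p (x m) - (\<Sum>k\<in>{1..Nn N m}. t' k *\<^sub>R v m k)) powr (conj_exp p)
           + (\<Sum>k\<in>{1..Nn N m}. t' k * \<beta> m k))"
    and x_next: "\<And>m. (\<forall>i\<le>m. blinfun_apply A (x i) \<noteq> y) \<Longrightarrow>
         x (Suc m) = Jpstar p (Jp p (x m) - (\<Sum>k\<in>{1..Nn N m}. t m k *\<^sub>R v m k))"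
    and active: "\<forall>i\<le>n. blinfun_apply A (x i) \<noteq> y"
  shows "M \<subseteq> H n
    \<and> Jp p (x n) - Jp p (x 0) \<in> span (\<Union>m<n. V m)
    \<and> Jp p (x n) - Jp p (x 0) \<in> closure (range (adj A))
    \<and> x (Suc n) = bproj p (H n) (x n)
    \<and> (\<forall>z\<in>M. Jp p (x (Suc n)) = bprojstar p ((+) (Jp p (x n)) ` V n) (Jp p z))
    \<and> Jpstar p (v n (Nn N n))
        = bproj p (perp (if n = 0 then {0} else V (n - 1))) (Jpstar p (u n))"
proof -
  note cf = conj_facts[OF p_gt]
  have sc: "sc TYPE('a)" using uc_sc[OF X_uc] .
  have scs: "sc TYPE('a \<Rightarrow>\<^sub>L real)" using sc_dual[OF X_uc X_smooth] .
  have JJ: "\<And>xs::'a \<Rightarrow>\<^sub>L real. Jp p (Jpstar p xs) = xs" using Jp_Jpstar[OF X_uc X_smooth p_gt] .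
  have JJ': "\<And>z::'a. Jpstar p (Jp p z) = z" using Jpstar_Jp[OF X_uc X_smooth p_gt] .
  have q1: "0 < 1 / conj_exp p" using cf by simp
  have p1: "0 < 1 / p" using p_gt by simp
  \<comment> \<open>first-order optimality of t\<close>
  have opt: "blinfun_apply (v m k) (x (Suc m)) = \<beta> m k"
    if act: "\<forall>i\<le>m. blinfun_apply A (x i) \<noteq> y" and k: "k \<in> {1..Nn N m}" for m k
  proof -
    define a where "a = Jp p (x m) - (\<Sum>k\<in>{1..Nn N m}. t m k *\<^sub>R v m k)"
    have xs: "x (Suc m) = Jpstar p a" using x_next[OF act] by (simp add: a_def)
    have "blinfun_apply (v m k) (Jpstar p a) = \<beta> m k"
    proof (rule opt_1d[OF X_uc p_gt])
      fix \<tau> :: real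
      define t' where "t' = (\<lambda>k'. t m k' + (if k' = k then \<tau> else 0))"
      have e1: "(\<Sum>k'\<in>{1..Nn N m}. t' k' *\<^sub>R v m k') = (\<Sum>k'\<in>{1..Nn N m}. t m k' *\<^sub>R v m k') + \<tau> *\<^sub>R v m k"
        unfolding t'_def using k by (intro sum_bump) auto
      have e2: "(\<Sum>k'\<in>{1..Nn N m}. t' k' * \<beta> m k') = (\<Sum>k'\<in>{1..Nn N m}. t m k' * \<beta> m k') + \<tau> * \<beta> m k"
        unfolding t'_def using k by (intro sum_bump_r) auto
      have e3: "Jp p (x m) - (\<Sum>k'\<in>{1..Nn N m}. t' k' *\<^sub>R v m k') = a - \<tau> *\<^sub>R v m k"
        unfolding e1 a_def by (simp add: algebra_simps)
      have "(1 / conj_exp p) * norm a powr (conj_exp p) + (\<Sum>k\<in>{1..Nn N m}. t m k * \<beta> m k)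
          \<le> (1 / conj_exp p) * norm (Jp p (x m) - (\<Sum>k\<in>{1..Nn N m}. t' k *\<^sub>R v m k)) powr (conj_exp p)
           + (\<Sum>k\<in>{1..Nn N m}. t' k * \<beta> m k)"
        using t_min[OF act] unfolding a_def by blast
      thus "(1 / conj_exp p) * norm a powr (conj_exp p)
          \<le> (1 / conj_exp p) * norm (a - \<tau> *\<^sub>R v m k) powr (conj_exp p) + \<tau> * \<beta> m k"
        unfolding e3 e2 by simp
    qed
    thus ?thesis using xs by simp
  qed
  have Jnext: "Jp p (x (Suc m)) = Jp p (x m) - (\<Sum>k\<in>{1..Nn N m}. t m k *\<^sub>R v m k)"
    if act: "\<forall>i\<le>m. blinfun_apply A (x i) \<noteq> y" for m
    using x_next[OF act] JJ by simp
  have vV: "v m k \<in> V m" if "k \<in> {1..Nn N m}" for m k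
    unfolding V_def v_def using that by (intro span_base) auto
  have inV: "(\<Sum>k\<in>{1..Nn N m}. c k *\<^sub>R v m k) \<in> V m" for m c
    unfolding V_def v_def by (intro span_sum span_scale span_base) auto
  have subV: "subspace (V m)" for m unfolding V_def by simp
  have act: "\<forall>i\<le>n. blinfun_apply A (x i) \<noteq> y" using active .
  have partA: "M \<subseteq> H n" unfolding M_def H_def hyperplane_def by auto
  have partB: "Jp p (x m) - Jp p (x 0) \<in> span (\<Union>m'<m. V m')" if "m \<le> n" for m
    using that
  proof (induction m)
    case 0 thus ?case by (simp add: span_zero)
  next
    case (Suc m)
    have actm: "\<forall>i\<le>m. blinfun_apply A (x i) \<noteq> y" using active Suc.prems by auto
    have "Jp p (x m) - Jp p (x 0) \<in> span (\<Union>m'<Suc m. V m')"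
    proof -
      have "(\<Union>m'<m. V m') \<subseteq> (\<Union>m'<Suc m. V m')" by (auto intro: less_SucI)
      hence "span (\<Union>m'<m. V m') \<subseteq> span (\<Union>m'<Suc m. V m')" by (rule span_mono)
      thus ?thesis using Suc.IH Suc.prems by auto
    qed
    moreover have "(\<Sum>k\<in>{1..Nn N m}. t m k *\<^sub>R v m k) \<in> span (\<Union>m'<Suc m. V m')"
      using inV[where c="t m" and m=m] by (intro span_base) auto
    ultimately have "(Jp p (x m) - Jp p (x 0)) - (\<Sum>k\<in>{1..Nn N m}. t m k *\<^sub>R v m k) \<in> span (\<Union>m'<Suc m. V m')"
      by (rule span_diff)
    moreover have "(Jp p (x m) - Jp p (x 0)) - (\<Sum>k\<in>{1..Nn N m}. t m k *\<^sub>R v m k) = Jp p (x (Suc m)) - Jp p (x 0)"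
      using Jnext[OF actm] by simp
    ultimately show ?case by metis
  qed
  have partB2: "Jp p (x n) - Jp p (x 0) \<in> closure (range (adj A))"
  proof -
    have "V m \<subseteq> range (adj A)" for m
      unfolding V_def by (intro span_minimal subspace_range_adj) auto
    hence "span (\<Union>m<n. V m) \<subseteq> range (adj A)"
      by (intro span_minimal subspace_range_adj) auto
    thus ?thesis using partB[of n] closure_subset by auto
  qed
  define a where "a = Jp p (x n) - (\<Sum>k\<in>{1..Nn N n}. t n k *\<^sub>R v n k)"
  define x' where "x' = x (Suc n)"
  have xa: "x' = Jpstar p a" using x_next[OF act] by (simp add: a_def x'_def)
  have Ja: "Jp p x' = a" using xa JJ by simp
  have optn: "\<And>k. k \<in> {1..Nn N n} \<Longrightarrow> blinfun_apply (v n k) x' = \<beta> n k"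
    using opt[OF act] by (simp add: x'_def)
  have inH: "x' \<in> H n"
    using optn unfolding H_def hyperplane_def v_def \<beta>_def by auto
  have convH: "convex (H n)" unfolding H_def by (intro convex_INT ballI convex_hyp)
  have minH: "Dp p (x n) x' \<le> Dp p (x n) z'" if z': "z' \<in> H n" for z'
  proof -
    have hz: "\<And>k. k \<in> {1..Nn N n} \<Longrightarrow> blinfun_apply (v n k) z' = \<beta> n k"
      using z' unfolding H_def hyperplane_def v_def \<beta>_def by auto
    have sumeq: "blinfun_apply (\<Sum>k\<in>{1..Nn N n}. t n k *\<^sub>R v n k) z' = blinfun_apply (\<Sum>k\<in>{1..Nn N n}. t n k *\<^sub>R v n k) x'"
      using hz optn by (simp add: blinfun.sum_left blinfun.scaleR_left)
    have Jx: "Jp p (x n) = a + (\<Sum>k\<in>{1..Nn N n}. t n k *\<^sub>R v n k)" by (simp add: a_def)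
    have sg: "(1/p) * norm x' powr p + blinfun_apply a (z' - x') \<le> (1/p) * norm z' powr p"
      using subgrad_X[OF X_smooth p_gt, of x' z'] Ja by simp
    show ?thesis using sg sumeq unfolding Dp_def Jx
      by (simp add: blinfun.add_left blinfun.diff_right)
  qed
  have partC1: "x (Suc n) = bproj p (H n) (x n)"
    unfolding bproj_def x'_def[symmetric]
  proof (rule the_equality[symmetric])
    show "x' \<in> H n \<and> (\<forall>z'\<in>H n. Dp p (x n) x' \<le> Dp p (x n) z')" using inH minH by auto
  next
    fix z assume z: "z \<in> H n \<and> (\<forall>z'\<in>H n. Dp p (x n) z \<le> Dp p (x n) z')"
    show "z = x'"
      by (rule unique_min[OF sc convH p_gt p1, where L="\<lambda>z. (1 / conj_exp p) * norm (x n) powr p - blinfun_apply (Jp p (x n)) z"])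
        (use z inH minH in \<open>auto simp: Dp_def blinfun.add_right blinfun.scaleR_right field_simps\<close>)
  qed
  have partC2: "Jp p (x (Suc n)) = bprojstar p ((+) (Jp p (x n)) ` V n) (Jp p z)" if zM: "z \<in> M" for z
  proof -
    define C where "C = (+) (Jp p (x n)) ` V n"
    have Vsub: "V n \<subseteq> {\<rho>. blinfun_apply \<rho> z = blinfun_apply \<rho> x'}"
      unfolding V_def
    proof (intro span_minimal subspace_eq_at subsetI)
      fix \<rho> assume "\<rho> \<in> {adj A (ws n k) |k. k \<in> {1..Nn N n}}"
      then obtain k where k: "k \<in> {1..Nn N n}" "\<rho> = adj A (ws n k)" by auto
      show "\<rho> \<in> {\<rho>. blinfun_apply \<rho> z = blinfun_apply \<rho> x'}"
        using optn[OF k(1)] k zM by (simp add: M_def v_def \<beta>_def)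
    qed
    have aC: "a \<in> C" unfolding C_def a_def
      by (rule image_eqI[of _ _ "- (\<Sum>k\<in>{1..Nn N n}. t n k *\<^sub>R v n k)"]) (use subspace_neg[OF subV inV] in auto)
    have convC: "convex C" unfolding C_def by (intro convex_translation subspace_imp_convex subV)
    have minC: "Dpstar p (Jp p z) a \<le> Dpstar p (Jp p z) w" if w: "w \<in> C" for w
    proof -
      obtain \<sigma> where \<sigma>: "\<sigma> \<in> V n" "w = Jp p (x n) + \<sigma>" using w by (auto simp: C_def)
      have "w - a = \<sigma> + (\<Sum>k\<in>{1..Nn N n}. t n k *\<^sub>R v n k)" by (simp add: \<sigma>(2) a_def)
      hence "w - a \<in> V n" using \<sigma>(1) inV subV by (simp add: subspace_add)
      hence eq: "blinfun_apply (w - a) z = blinfun_apply (w - a) x'" using Vsub by auto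
      have sg: "(1/conj_exp p) * norm a powr conj_exp p + blinfun_apply (w - a) x' \<le> (1/conj_exp p) * norm w powr conj_exp p"
        using subgrad_Xs[OF X_uc p_gt, of a w] xa by simp
      show ?thesis using sg eq unfolding Dpstar_def JJ' by (simp add: blinfun.diff_left)
    qed
    have "Jp p x' = bprojstar p C (Jp p z)"
      unfolding bprojstar_def Ja
    proof (rule the_equality[symmetric])
      show "a \<in> C \<and> (\<forall>z'\<in>C. Dpstar p (Jp p z) a \<le> Dpstar p (Jp p z) z')" using aC minC by auto
    next
      fix b assume b: "b \<in> C \<and> (\<forall>z'\<in>C. Dpstar p (Jp p z) b \<le> Dpstar p (Jp p z) z')"
      show "b = a"
        by (rule unique_min[OF scs convC cf(1) q1, where L="\<lambda>w. (1 / p) * norm (Jp p z) powr conj_exp p - blinfun_apply w (Jpstar p (Jp p z))"])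
          (use b aC minC in \<open>auto simp: Dpstar_def blinfun.add_left blinfun.scaleR_left field_simps\<close>)
    qed
    thus ?thesis by (simp add: C_def x'_def)
  qed
  define w where "w = v n (Nn N n)"
  define S where "S = (\<Sum>k\<in>{1..Nprev N n}. s n k *\<^sub>R v (n - 1) k)"
  have wu: "w = u n - S"
    unfolding w_def S_def v_def u_def ws_new[OF act] adj_diff adj_sum ..
  define P where "P = perp (if n = 0 then {0} else V (n - 1))"
  define x'' where "x'' = Jpstar p w"
  have Jx'': "Jp p x'' = w" using JJ by (simp add: x''_def)
  have Nprev: "n \<noteq> 0 \<Longrightarrow> Nprev N n = Nn N (n - 1)" by (simp add: Nprev_def)
  have vP: "blinfun_apply (v (n - 1) k) z = 0" if "k \<in> {1..Nprev N n}" "z \<in> P" for k z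
  proof (cases "n = 0")
    case True thus ?thesis using that by (simp add: Nprev_def)
  next
    case False
    have "v (n - 1) k \<in> V (n - 1)" using vV that Nprev[OF False] by simp
    thus ?thesis using that False by (simp add: P_def perp_def)
  qed
  have Sz: "blinfun_apply S z = 0" if "z \<in> P" for z
    unfolding S_def using vP that by (simp add: blinfun.sum_left blinfun.scaleR_left)
  have x''P: "x'' \<in> P"
  proof (cases "n = 0")
    case True thus ?thesis by (simp add: P_def perp_def)
  next
    case False
    have "V (n - 1) \<subseteq> {\<rho>. blinfun_apply \<rho> x'' = blinfun_apply \<rho> 0}"
      unfolding V_def
    proof (intro span_minimal subspace_eq_at subsetI)
      fix \<rho> assume "\<rho> \<in> {adj A (ws (n - 1) k) |k. k \<in> {1..Nn N (n - 1)}}"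
      then obtain k where k: "k \<in> {1..Nn N (n - 1)}" "\<rho> = adj A (ws (n - 1) k)" by auto
      have kk: "k \<in> {1..Nprev N n}" using k Nprev[OF False] by simp
      have "blinfun_apply (v (n - 1) k) (Jpstar p w) = 0"
      proof (rule opt_1d[OF X_uc p_gt])
        fix \<tau> :: real
        define s' where "s' = (\<lambda>k'. s n k' + (if k' = k then \<tau> else 0))"
        have e1: "(\<Sum>k'\<in>{1..Nprev N n}. s' k' *\<^sub>R v (n - 1) k') = S + \<tau> *\<^sub>R v (n - 1) k"
          unfolding s'_def S_def using kk by (intro sum_bump) auto
        have "norm (u n - S) powr (conj_exp p) \<le> norm (u n - (S + \<tau> *\<^sub>R v (n - 1) k)) powr (conj_exp p)"
          using s_min[OF act, rule_format, of s'] unfolding S_def[symmetric] e1 .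
        hence "norm w powr (conj_exp p) \<le> norm (w - \<tau> *\<^sub>R v (n - 1) k) powr (conj_exp p)"
          by (simp add: wu algebra_simps)
        thus "(1 / conj_exp p) * norm w powr (conj_exp p)
            \<le> (1 / conj_exp p) * norm (w - \<tau> *\<^sub>R v (n - 1) k) powr (conj_exp p) + \<tau> * 0"
          using q1 by (simp add: divide_right_mono)
      qed
      thus "\<rho> \<in> {\<rho>. blinfun_apply \<rho> x'' = blinfun_apply \<rho> 0}"
        using k by (simp add: x''_def v_def)
    qed
    thus ?thesis using False by (auto simp: P_def perp_def)
  qed
  have convP: "convex P" unfolding P_def by (rule convex_perp)
  have minP: "Dp p (Jpstar p (u n)) x'' \<le> Dp p (Jpstar p (u n)) z" if zP: "z \<in> P" for z
  proof -
    have sg: "(1/p) * norm x'' powr p + blinfun_apply w (z - x'') \<le> (1/p) * norm z powr p"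
      using subgrad_X[OF X_smooth p_gt, of x'' z] Jx'' by simp
    have "u n = w + S" using wu by simp
    thus ?thesis using sg Sz[OF zP] Sz[OF x''P] unfolding Dp_def JJ
      by (simp add: blinfun.add_left blinfun.diff_right)
  qed
  have partD: "Jpstar p w = bproj p P (Jpstar p (u n))"
    unfolding bproj_def x''_def[symmetric]
  proof (rule the_equality[symmetric])
    show "x'' \<in> P \<and> (\<forall>z'\<in>P. Dp p (Jpstar p (u n)) x'' \<le> Dp p (Jpstar p (u n)) z')" using x''P minP by auto
  next
    fix z assume z: "z \<in> P \<and> (\<forall>z'\<in>P. Dp p (Jpstar p (u n)) z \<le> Dp p (Jpstar p (u n)) z')"
    show "z = x''"
      by (rule unique_min[OF sc convP p_gt p1, where L="\<lambda>z. (1 / conj_exp p) * norm (Jpstar p (u n)) powr p - blinfun_apply (Jp p (Jpstar p (u n))) z"])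
        (use z x''P minP in \<open>auto simp: Dp_def blinfun.add_right blinfun.scaleR_right field_simps\<close>)
  qed
  show ?thesis
    using partA partB[of n] partB2 partC1 partC2 partD by (simp add: w_def P_def)
qed

end
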